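(* In the public bug bounty model described in the context, define $\Omega_\infty(\hat\kappa)=\sum_lw^l\mu^lq^le^{-q^l\hat\kappa}-\underline c$ and let $\tilde\kappa$ be its unique root in $[0,\infty)$. Then the optimal asymptotic participation, i.e. the maximizer of $$W_\infty(\hat\kappa)=\sum_lw^l\mu^l\big(1-e^{-q^l\hat\kappa}\big)-\hat\kappa\underline c$$ over $\hat\kappa\in[0,\kappa_a(\overline v)]$, is $\hat\kappa^*=\min\{\tilde\kappa,\kappa_a(\overline v)\}$, and any prizes $\boldsymbol v^\infty$, $v_a^\infty$ and complexity $q_a^\infty$ (satisfying $\sum_lv^l+v_a\le\overline v$, $v^l\ge0$, $v_a\ge0$, $q_a\in[0,1]$) that solve $\hat\kappa^*=\Psi_\infty(\hat\kappa^*;\boldsymbol v,v_a,q_a)$ are optimal.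
   Context: Public bug bounty model (limit of $n\to\infty$ agents). There are $L$ potential organic bugs; bug $l$ exists with probability $\mu^l\in(0,1]$ (independently), has complexity $q^l\in(0,1]$, and the designer values finding it at $w^l\ge0$. Agents' costs are i.i.d. from a fixed continuous distribution $F$ with full support $[\underline c,\overline c]$, $0<\underline c<\overline c\le\infty$, finite density $f$, $F/f$ non-decreasing. The designer has budget $\overline v>0$ with $\overline v\ge\underline c$, and $\sum_lw^l\mu^lq^l\ge\underline c$. Prizes $v^l\ge0$ for organic bugs, one artificial bug with prize $v_a\ge0$ and complexity $q_a\in[0,1]$. $\Psi_\infty(\hat\kappa;\boldsymbol v,v_a,q_a)=\sum_lv^l\mu^l\frac{1-e^{-q^l\hat\kappa}}{\underline c}+v_a\frac{1-e^{-q_a\hat\kappa}}{\underline c}$; for given prizes, the asymptotic participation is $\kappa^*=\lim_{n\to\infty}nF(c_n)$, with $c_n$ the symmetric equilibrium threshold with $n$ agents, and equals the largest fixed point of $\Psi_\infty$ in $[0,\infty)$; the designer's asymptotic payoff is $W_\infty(\kappa^* )$. $\kappa_a(\overline v)$ is the largest fixed point in $[0,\infty)$ of $\hat\kappa\mapsto\overline v(1-e^{-\hat\kappa})/\underline c$, and the set of achievable participations is $[0,\kappa_a(\overline v)]$. *)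

theory Defs
  imports Complex_Main
begin

text \<open>Organic bugs are indexed by l < L, with existence probabilities mu l,
complexities q l and values w l. cl is the lower end of the cost support.\<close>

definition largest_fp :: "(real \<Rightarrow> real) \<Rightarrow> real" where
  "largest_fp g = (GREATEST k. 0 \<le> k \<and> g k = k)"

definition Psi_inf :: "nat \<Rightarrow> (nat \<Rightarrow> real) \<Rightarrow> (nat \<Rightarrow> real) \<Rightarrow> real
    \<Rightarrow> (nat \<Rightarrow> real) \<Rightarrow> real \<Rightarrow> real \<Rightarrow> real \<Rightarrow> real" where
  "Psi_inf L mu q cl v va qa k =
     (\<Sum>l<L. v l * mu l * (1 - exp (- q l * k)) / cl) + va * (1 - exp (- qa * k)) / cl"

text \<open>Asymptotic participation induced by prizes (v, va) and artificial complexity qa.\<close>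
definition kappa_inf :: "nat \<Rightarrow> (nat \<Rightarrow> real) \<Rightarrow> (nat \<Rightarrow> real) \<Rightarrow> real
    \<Rightarrow> (nat \<Rightarrow> real) \<Rightarrow> real \<Rightarrow> real \<Rightarrow> real" where
  "kappa_inf L mu q cl v va qa = largest_fp (Psi_inf L mu q cl v va qa)"

definition kappa_a :: "real \<Rightarrow> real \<Rightarrow> real" where
  "kappa_a vbar cl = largest_fp (\<lambda>k. vbar * (1 - exp (- k)) / cl)"

definition W_inf :: "nat \<Rightarrow> (nat \<Rightarrow> real) \<Rightarrow> (nat \<Rightarrow> real) \<Rightarrow> (nat \<Rightarrow> real)
    \<Rightarrow> real \<Rightarrow> real \<Rightarrow> real" where
  "W_inf L w mu q cl k = (\<Sum>l<L. w l * mu l * (1 - exp (- q l * k))) - k * cl"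

definition Omega_inf :: "nat \<Rightarrow> (nat \<Rightarrow> real) \<Rightarrow> (nat \<Rightarrow> real) \<Rightarrow> (nat \<Rightarrow> real)
    \<Rightarrow> real \<Rightarrow> real \<Rightarrow> real" where
  "Omega_inf L w mu q cl k = (\<Sum>l<L. w l * mu l * q l * exp (- q l * k)) - cl"

definition feasible :: "nat \<Rightarrow> real \<Rightarrow> (nat \<Rightarrow> real) \<Rightarrow> real \<Rightarrow> real \<Rightarrow> bool" where
  "feasible L vbar v va qa \<longleftrightarrow>
     (\<forall>l<L. 0 \<le> v l) \<and> 0 \<le> va \<and> 0 \<le> qa \<and> qa \<le> 1 \<and> (\<Sum>l<L. v l) + va \<le> vbar"

definition optimal_prizes :: "nat \<Rightarrow> (nat \<Rightarrow> real) \<Rightarrow> (nat \<Rightarrow> real) \<Rightarrow> (nat \<Rightarrow> real)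
    \<Rightarrow> real \<Rightarrow> real \<Rightarrow> (nat \<Rightarrow> real) \<Rightarrow> real \<Rightarrow> real \<Rightarrow> bool" where
  "optimal_prizes L w mu q cl vbar v va qa \<longleftrightarrow>
     feasible L vbar v va qa \<and>
     (\<forall>v' va' qa'. feasible L vbar v' va' qa' \<longrightarrow>
        W_inf L w mu q cl (kappa_inf L mu q cl v' va' qa')
          \<le> W_inf L w mu q cl (kappa_inf L mu q cl v va qa))"

end

theory Submission
  imports Defs "HOL-Analysis.Analysis"
begin

lemma largest_fp_prop:
  fixes g :: "real \<Rightarrow> real"
  assumes cont: "continuous_on UNIV g" and g0: "g 0 = 0" and bnd: "\<And>k. 0 \<le> k \<Longrightarrow> g k \<le> B"
  shows "0 \<le> largest_fp g \<and> g (largest_fp g) = largest_fp g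
         \<and> (\<forall>k. 0 \<le> k \<and> g k = k \<longrightarrow> k \<le> largest_fp g)"
proof -
  define S where "S = {k. 0 \<le> k \<and> g k = k}"
  have S_eq: "S = {k. 0 \<le> k} \<inter> {k. g k = k}" unfolding S_def by auto
  have "closed {k::real. 0 \<le> k}" using closed_atLeast[of 0] by (simp add: atLeast_def)
  moreover have "closed {k. g k = k}"
    by (rule closed_Collect_eq[OF cont]) (simp add: continuous_on_id)
  ultimately have cS: "closed S" unfolding S_eq by (rule closed_Int)
  have ne: "S \<noteq> {}" using g0 unfolding S_def by auto
  have bS: "bdd_above S"
  proof (rule bdd_aboveI[of _ B])
    fix x assume "x \<in> S"
    then have "0 \<le> x" "g x = x" by (auto simp: S_def)
    then show "x \<le> B" using bnd[of x] by simp
  qed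
  have inS: "Sup S \<in> S" using closed_contains_Sup[OF ne bS cS] .
  have ub: "k \<le> Sup S" if "k \<in> S" for k using cSup_upper[OF that bS] .
  have "largest_fp g = Sup S"
    unfolding largest_fp_def
    by (rule Greatest_equality) (use inS ub in \<open>auto simp: S_def\<close>)
  then show ?thesis using inS ub unfolding S_def by auto
qed

theorem theorem3:
  fixes L :: nat and w mu q :: "nat \<Rightarrow> real" and cl vbar kt :: real
  assumes mu: "\<And>l. l < L \<Longrightarrow> 0 < mu l \<and> mu l \<le> 1"
    and q: "\<And>l. l < L \<Longrightarrow> 0 < q l \<and> q l \<le> 1"
    and w: "\<And>l. l < L \<Longrightarrow> 0 \<le> w l"
    and cl: "0 < cl"
    and vbar: "cl \<le> vbar"
    and wsum: "cl \<le> (\<Sum>l<L. w l * mu l * q l)"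
    and kt: "0 \<le> kt" "Omega_inf L w mu q cl kt = 0"
  shows "let ks = min kt (kappa_a vbar cl) in
           0 \<le> ks \<and> ks \<le> kappa_a vbar cl
         \<and> (\<forall>k. 0 \<le> k \<and> k \<le> kappa_a vbar cl \<and> k \<noteq> ks \<longrightarrow>
               W_inf L w mu q cl k < W_inf L w mu q cl ks)
         \<and> (\<forall>v va qa. feasible L vbar v va qa \<and> kappa_inf L mu q cl v va qa = ks \<longrightarrow>
               optimal_prizes L w mu q cl vbar v va qa)"
proof -
  define g where "g = (\<lambda>k::real. vbar * (1 - exp (- k)) / cl)"
  define ka where "ka = kappa_a vbar cl"
  have vb0: "0 \<le> vbar" using cl vbar by linarith
  have gb: "g k \<le> vbar / cl" if "0 \<le> k" for k
    unfolding g_def using vb0 cl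
    by (intro divide_right_mono) (auto intro: mult_left_le)
  have gcont: "continuous_on UNIV g" unfolding g_def by (intro continuous_intros) (use cl in auto)
  have KA: "0 \<le> ka \<and> g ka = ka \<and> (\<forall>k. 0 \<le> k \<and> g k = k \<longrightarrow> k \<le> ka)"
    unfolding ka_def kappa_a_def g_def[symmetric]
    by (rule largest_fp_prop[OF gcont _ gb]) (simp add: g_def)
  have below: "k \<le> ka" if k0: "0 \<le> k" and kg: "k \<le> g k" for k
  proof -
    define M where "M = vbar / cl + 1"
    have kM: "k \<le> M" using kg gb[OF k0] unfolding M_def by linarith
    have "\<exists>x\<ge>k. x \<le> M \<and> (\<lambda>x. g x - x) x = 0"
    proof (rule IVT2)
      show "g M - M \<le> 0" using gb[of M] kM k0 unfolding M_def by linarith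
      show "0 \<le> g k - k" using kg by simp
      show "k \<le> M" by fact
      show "\<forall>x. k \<le> x \<and> x \<le> M \<longrightarrow> isCont (\<lambda>x. g x - x) x"
        using gcont by (auto intro!: continuous_intros simp: continuous_on_eq_continuous_at)
    qed
    then obtain x where "x \<ge> k" "g x = x" by auto
    moreover have "0 \<le> x" using \<open>x \<ge> k\<close> k0 by linarith
    moreover have "x \<le> ka" using KA[THEN conjunct2, THEN conjunct2, rule_format, OF conjI[OF \<open>0 \<le> x\<close> \<open>g x = x\<close>]] .
    ultimately show ?thesis by linarith
  qed
  have KI: "0 \<le> kappa_inf L mu q cl v va qa \<and> kappa_inf L mu q cl v va qa \<le> ka"
    if fe: "feasible L vbar v va qa" for v va qa
  proof -
    let ?P = "Psi_inf L mu q cl v va qa"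
    have vl: "\<And>l. l < L \<Longrightarrow> 0 \<le> v l" and va: "0 \<le> va" and qa: "0 \<le> qa" "qa \<le> 1"
      and vs: "(\<Sum>l<L. v l) + va \<le> vbar"
      using fe unfolding feasible_def by auto
    have Pg: "?P k \<le> g k" if k0: "0 \<le> k" for k
    proof -
      have e: "1 - exp (- r * k) \<le> 1 - exp (- k)" if "r \<le> 1" for r
      proof -
        have "r * k \<le> 1 * k" using mult_right_mono[OF that k0] .
        then show ?thesis by simp
      qed
      have e0: "0 \<le> 1 - exp (- r * k)" if "0 \<le> r" for r
        using that k0 by simp
      have "(\<Sum>l<L. v l * mu l * (1 - exp (- q l * k)) / cl) \<le> (\<Sum>l<L. v l * (1 - exp (- k)) / cl)"
      proof (rule sum_mono)
        fix l assume "l \<in> {..<L}"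
        then have l: "l < L" by simp
        have "v l * mu l * (1 - exp (- q l * k)) \<le> v l * 1 * (1 - exp (- k))"
          using mu[OF l] q[OF l] vl[OF l] e[of "q l"] e0[of "q l"]
          by (intro mult_mono) auto
        then show "v l * mu l * (1 - exp (- q l * k)) / cl \<le> v l * (1 - exp (- k)) / cl"
          using cl by (simp add: divide_right_mono)
      qed
      moreover have "va * (1 - exp (- qa * k)) / cl \<le> va * (1 - exp (- k)) / cl"
        using va e[OF qa(2)] cl by (intro divide_right_mono mult_left_mono) auto
      ultimately have "?P k \<le> (\<Sum>l<L. v l * (1 - exp (- k)) / cl) + va * (1 - exp (- k)) / cl"
        unfolding Psi_inf_def by linarith
      also have "\<dots> = ((\<Sum>l<L. v l) + va) * (1 - exp (- k)) / cl"
        by (simp add: sum_divide_distrib[symmetric] sum_distrib_right[symmetric] add_divide_distrib distrib_right)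
      also have "\<dots> \<le> g k" unfolding g_def
        using vs cl e0[of 1] by (intro divide_right_mono mult_right_mono) auto
      finally show ?thesis .
    qed
    have Pc: "continuous_on UNIV ?P" unfolding Psi_inf_def
      by (intro continuous_intros) (use cl in auto)
    have P: "0 \<le> kappa_inf L mu q cl v va qa \<and> ?P (kappa_inf L mu q cl v va qa) = kappa_inf L mu q cl v va qa"
    proof -
      have P0: "?P 0 = 0" by (simp add: Psi_inf_def)
      have Pb: "?P k \<le> vbar / cl" if "0 \<le> k" for k
        using Pg[OF that] gb[OF that] by linarith
      note H = largest_fp_prop[OF Pc P0 Pb]
      show ?thesis using H[THEN conjunct1] H[THEN conjunct2, THEN conjunct1]
        unfolding kappa_inf_def by (rule conjI)
    qed
    then have "kappa_inf L mu q cl v va qa \<le> g (kappa_inf L mu q cl v va qa)"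
      using Pg[of "kappa_inf L mu q cl v va qa"] by simp
    then show ?thesis using below[of "kappa_inf L mu q cl v va qa"] P by simp
  qed
  let ?W = "W_inf L w mu q cl"
  let ?O = "Omega_inf L w mu q cl"
  have D: "(?W has_real_derivative ?O x) (at x)" for x
    unfolding W_inf_def[abs_def] Omega_inf_def
    by (auto intro!: derivative_eq_intros simp: algebra_simps)
  obtain l0 where l0: "l0 < L" "0 < w l0 * mu l0 * q l0"
  proof (rule ccontr)
    assume "\<not> thesis"
    then have "\<forall>l<L. w l * mu l * q l \<le> 0" using that by (meson not_le)
    then have "(\<Sum>l<L. w l * mu l * q l) \<le> 0" by (intro sum_nonpos) auto
    then show False using wsum cl by linarith
  qed
  have Odec: "?O y < ?O x" if "x < y" for x y
  proof -
    have "(\<Sum>l<L. w l * mu l * q l * exp (- q l * y)) < (\<Sum>l<L. w l * mu l * q l * exp (- q l * x))"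
    proof (rule sum_strict_mono_ex1)
      show "\<forall>l\<in>{..<L}. w l * mu l * q l * exp (- q l * y) \<le> w l * mu l * q l * exp (- q l * x)"
      proof
        fix l assume "l \<in> {..<L}"
        then have l: "l < L" by simp
        have "0 \<le> w l * mu l * q l" using w[OF l] mu[OF l] q[OF l] by simp
        moreover have "exp (- q l * y) \<le> exp (- q l * x)" using q[OF l] that by simp
        ultimately show "w l * mu l * q l * exp (- q l * y) \<le> w l * mu l * q l * exp (- q l * x)"
          by (metis mult_left_mono)
      qed
      have "exp (- q l0 * y) < exp (- q l0 * x)" using q[OF l0(1)] that by simp
      then show "\<exists>l\<in>{..<L}. w l * mu l * q l * exp (- q l * y) < w l * mu l * q l * exp (- q l * x)"
        using l0 by (intro bexI[of _ l0]) (auto intro: mult_strict_left_mono)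
    qed simp
    then show ?thesis unfolding Omega_inf_def by linarith
  qed
  have inc: "?W a < ?W b" if ab: "a < b" "b \<le> kt" for a b
  proof -
    obtain z where z: "a < z" "z < b" "?W b - ?W a = (b - a) * ?O z"
      using MVT2[OF ab(1), of ?W ?O] D by blast
    have "0 < ?O z" using Odec[of z kt] z that kt by auto
    then have "0 < (b - a) * ?O z" using that by (intro mult_pos_pos) auto
    then show ?thesis using z by linarith
  qed
  have dec: "?W b < ?W a" if ab: "a < b" "kt \<le> a" for a b
  proof -
    obtain z where z: "a < z" "z < b" "?W b - ?W a = (b - a) * ?O z"
      using MVT2[OF ab(1), of ?W ?O] D by blast
    have "?O z < 0" using Odec[of kt z] z that kt by auto
    then have "(b - a) * ?O z < 0" using that by (intro mult_pos_neg) auto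
    then show ?thesis using z by linarith
  qed
  define ks where "ks = min kt ka"
  have ks0: "0 \<le> ks" "ks \<le> ka" using KA kt unfolding ks_def by auto
  have best: "?W k < ?W ks" if "0 \<le> k" "k \<le> ka" "k \<noteq> ks" for k
  proof (cases "k < ks")
    case True
    then show ?thesis using inc[of k ks] unfolding ks_def by auto
  next
    case False
    then have "ks < k" using that by auto
    then have "ks = kt" using that unfolding ks_def by auto
    then show ?thesis using dec[of ks k] \<open>ks < k\<close> by auto
  qed
  have opt: "optimal_prizes L w mu q cl vbar v va qa"
    if "feasible L vbar v va qa" "kappa_inf L mu q cl v va qa = ks" for v va qa
    unfolding optimal_prizes_def
  proof (intro conjI allI impI)
    show "feasible L vbar v va qa" by fact
    fix v' va' qa' assume f: "feasible L vbar v' va' qa'"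
    show "?W (kappa_inf L mu q cl v' va' qa') \<le> ?W (kappa_inf L mu q cl v va qa)"
      using KI[OF f] best[of "kappa_inf L mu q cl v' va' qa'"] that(2)
      by (cases "kappa_inf L mu q cl v' va' qa' = ks") auto
  qed
  show ?thesis
    unfolding Let_def ka_def[symmetric] ks_def[symmetric]
    using ks0 best opt by blast
qed

end
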